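(* Let $q$ be an odd prime power, $s\ge 1$, and $E,F\subset\mathbb{F}_q^s$. Then \begin{align*} \sum_{j \in \mathbb{F}_q} \nu(j)^2 & \le \frac{(\#E)^2(\#F)^2}{q} + q^{s-1} (\#E)(\#F) + q^{3s} \left|\sigma_{E,F}(0)\right|^2 + q^{3s} \sum_{r \in \mathbb{F}_q^*} \sigma_E(r) \sigma_F(r)\\ & \le \frac{(\#E)^2(\#F)^2}{q} + q^{3s} \sum_{r \in \mathbb{F}_q} \sigma_E(r) \sigma_F(r) + q^{s-1} (\#E)(\#F). \end{align*}
   Context: $\mathbb{F}_q$ is the finite field with $q$ elements ($q$ odd), $\mathbb{F}_q^*=\mathbb{F}_q\setminus\{0\}$. Fix a nontrivial additive character $\psi$ of $\mathbb{F}_q$. For $f:\mathbb{F}_q^s\to\mathbb{C}$, $\hat f(\mathbf{x})=q^{-s}\sum_{\mathbf{m}\in\mathbb{F}_q^s}\psi(-\mathbf{m}\cdot\mathbf{x})f(\mathbf{m})$. Sets are identified with their indicator functions. $|\mathbf{x}|^2=\sum_ix_i^2$. $\nu(j)=\#\{(\mathbf{x},\mathbf{y})\in E\times F: |\mathbf{x}-\mathbf{y}|^2=j\}$. $\sigma_E(r)=\sum_{\mathbf{a}:|\mathbf{a}|^2=r}|\hat E(\mathbf{a})|^2$, similarly $\sigma_F$, and $\sigma_{E,F}(r)=\sum_{\mathbf{m}:|\mathbf{m}|^2=r}\overline{\hat E(\mathbf{m})}\hat F(\mathbf{m})$. *)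

theory Defs
  imports Complex_Main "HOL-Library.Cardinality"
begin

text \<open>Vectors in F_q^s are functions 'n \<Rightarrow> 'a with 'n a finite index type, s = CARD('n).\<close>

definition add_char :: "('a::field \<Rightarrow> complex) \<Rightarrow> bool" where
  "add_char \<psi> \<longleftrightarrow> (\<forall>x y. \<psi> (x + y) = \<psi> x * \<psi> y) \<and> (\<forall>x. cmod (\<psi> x) = 1)"

definition nontrivial_add_char :: "('a::field \<Rightarrow> complex) \<Rightarrow> bool" where
  "nontrivial_add_char \<psi> \<longleftrightarrow> add_char \<psi> \<and> (\<exists>x. \<psi> x \<noteq> 1)"

definition dotp :: "('n::finite \<Rightarrow> 'a::field) \<Rightarrow> ('n \<Rightarrow> 'a) \<Rightarrow> 'a" where
  "dotp x y = (\<Sum>i\<in>UNIV. x i * y i)"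

definition normsq :: "('n::finite \<Rightarrow> 'a::field) \<Rightarrow> 'a" where
  "normsq x = (\<Sum>i\<in>UNIV. (x i)^2)"

definition fourier :: "('a::{finite,field} \<Rightarrow> complex) \<Rightarrow> (('n::finite \<Rightarrow> 'a) \<Rightarrow> complex)
    \<Rightarrow> ('n \<Rightarrow> 'a) \<Rightarrow> complex" where
  "fourier \<psi> f x = (1 / (of_nat CARD('a)) ^ CARD('n)) *
      (\<Sum>m\<in>UNIV. \<psi> (- dotp m x) * f m)"

definition ind :: "('n \<Rightarrow> 'a) set \<Rightarrow> ('n \<Rightarrow> 'a) \<Rightarrow> complex" where
  "ind E x = (if x \<in> E then 1 else 0)"

definition nu :: "('n::finite \<Rightarrow> 'a::{finite,field}) set \<Rightarrow> ('n \<Rightarrow> 'a) set \<Rightarrow> 'a \<Rightarrow> nat" where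
  "nu E F j = card {(x, y). x \<in> E \<and> y \<in> F \<and> normsq (x - y) = j}"

definition sigma :: "('a::{finite,field} \<Rightarrow> complex) \<Rightarrow> ('n::finite \<Rightarrow> 'a) set \<Rightarrow> 'a \<Rightarrow> real" where
  "sigma \<psi> E r = (\<Sum>a\<in>{a. normsq a = r}. (cmod (fourier \<psi> (ind E) a))^2)"

definition sigma2 :: "('a::{finite,field} \<Rightarrow> complex) \<Rightarrow> ('n::finite \<Rightarrow> 'a) set
    \<Rightarrow> ('n \<Rightarrow> 'a) set \<Rightarrow> 'a \<Rightarrow> complex" where
  "sigma2 \<psi> E F r = (\<Sum>m\<in>{m. normsq m = r}. cnj (fourier \<psi> (ind E) m) * fourier \<psi> (ind F) m)"

end

theory Submission
  imports Defs
begin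

lemma char0: assumes "add_char \<psi>" shows "\<psi> 0 = 1"
proof -
  have "\<psi> 0 = \<psi> 0 * \<psi> 0" using assms unfolding add_char_def by (metis add_0)
  moreover have "\<psi> 0 \<noteq> 0" using assms unfolding add_char_def by (metis norm_zero zero_neq_one)
  ultimately show ?thesis by simp
qed

lemma char_add: assumes "add_char \<psi>" shows "\<psi> (x + y) = \<psi> x * \<psi> y"
  using assms unfolding add_char_def by blast

lemma char_neg: assumes "add_char \<psi>" shows "\<psi> (- x) = cnj (\<psi> x)"
proof -
  have "\<psi> x * \<psi> (-x) = 1" using char_add[OF assms, of x "-x"] char0[OF assms] by simp
  moreover have "\<psi> x * cnj (\<psi> x) = 1"
    using assms unfolding add_char_def by (metis complex_norm_square of_real_1 power_one)
  moreover have "\<psi> x \<noteq> 0" using assms unfolding add_char_def by (metis norm_zero zero_neq_one)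
  ultimately show ?thesis by (metis mult_left_cancel)
qed

lemma char_diff: assumes "add_char \<psi>" shows "\<psi> (x - y) = \<psi> x * cnj (\<psi> y)"
  using char_add[OF assms, of x "-y"] char_neg[OF assms, of y] by simp

lemma char_sum_zero:
  fixes ch :: "'g::{finite,ab_group_add} \<Rightarrow> complex"
  assumes "\<And>x y. ch (x + y) = ch x * ch y" and "ch g \<noteq> 1"
  shows "(\<Sum>x\<in>UNIV. ch x) = 0"
proof -
  have "(\<Sum>x\<in>UNIV. ch x) = (\<Sum>x\<in>UNIV. ch (x + g))"
    by (rule sum.reindex_bij_witness[of _ "\<lambda>x. x + g" "\<lambda>x. x - g"]) auto
  also have "\<dots> = ch g * (\<Sum>x\<in>UNIV. ch x)"
    by (simp add: assms(1) sum_distrib_left mult.commute)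
  finally have "(1 - ch g) * (\<Sum>x\<in>UNIV. ch x) = 0" by (simp add: algebra_simps)
  thus ?thesis using assms(2) by simp
qed

lemma card_times_zero:
  fixes a :: "'g::{finite,ring_1}"
  shows "of_nat CARD('g) * a = 0"
proof -
  have "(\<Sum>x\<in>UNIV. x) = (\<Sum>x\<in>UNIV. x + a)"
    by (rule sum.reindex_bij_witness[of _ "\<lambda>x. x + a" "\<lambda>x. x - a"]) auto
  also have "\<dots> = (\<Sum>x\<in>UNIV. x) + of_nat CARD('g) * a"
    by (simp add: sum.distrib)
  finally show ?thesis by simp
qed

lemma two_nz:
  assumes "odd CARD('a::{finite,field})" shows "(2::'a) \<noteq> 0"
proof
  assume h: "(2::'a) = 0"
  obtain k where k: "CARD('a) = 2*k+1" using assms oddE by blast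
  have "(of_nat CARD('a) :: 'a) = 0" using card_times_zero[of "1::'a"] by simp
  hence "(2::'a) * of_nat k + 1 = 0" using k by (simp add: add.commute)
  thus False using h by (simp add: add.commute)
qed


lemma orth1:
  fixes \<psi> :: "'a::{finite,field} \<Rightarrow> complex"
  assumes "nontrivial_add_char \<psi>"
  shows "(\<Sum>t\<in>UNIV. \<psi> (c * t)) = (if c = 0 then of_nat CARD('a) else 0)"
proof (cases "c = 0")
  case True
  have "add_char \<psi>" using assms unfolding nontrivial_add_char_def by blast
  then show ?thesis using True char0 by simp
next
  case False
  have ac: "add_char \<psi>" using assms unfolding nontrivial_add_char_def by blast
  obtain a where a: "\<psi> a \<noteq> 1" using assms unfolding nontrivial_add_char_def by blast
  have "(\<Sum>t\<in>UNIV. \<psi> (c * t)) = 0"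
  proof (rule char_sum_zero[where g = "a / c"])
    show "\<psi> (c * (x + y)) = \<psi> (c * x) * \<psi> (c * y)" for x y
      using char_add[OF ac] by (simp add: distrib_left)
    show "\<psi> (c * (a / c)) \<noteq> 1" using a False by simp
  qed
  then show ?thesis using False by simp
qed

lemma card_vec: "CARD('n::finite \<Rightarrow> 'a::finite) = CARD('a) ^ CARD('n)"
  by (simp add: card_fun)

lemma orthn:
  fixes \<psi> :: "'a::{finite,field} \<Rightarrow> complex" and v :: "'n::finite \<Rightarrow> 'a"
  assumes "nontrivial_add_char \<psi>"
  shows "(\<Sum>m\<in>UNIV. \<psi> (dotp m v)) = (if v = (\<lambda>_. 0) then of_nat CARD('a) ^ CARD('n) else 0)"
proof (cases "v = (\<lambda>_. 0)")
  case True
  have "add_char \<psi>" using assms unfolding nontrivial_add_char_def by blast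
  then show ?thesis using True char0 by (simp add: dotp_def card_vec)
next
  case False
  have ac: "add_char \<psi>" using assms unfolding nontrivial_add_char_def by blast
  obtain a where a: "\<psi> a \<noteq> 1" using assms unfolding nontrivial_add_char_def by blast
  obtain i where i: "v i \<noteq> 0" using False by auto
  define w where "w = (\<lambda>j. if j = i then a / v i else 0)"
  have dw: "dotp w v = a"
  proof -
    have "dotp w v = (\<Sum>j\<in>UNIV. if j = i then a else 0)"
      unfolding dotp_def w_def by (rule sum.cong) (use i in auto)
    also have "\<dots> = a" by simp
    finally show ?thesis .
  qed
  have dadd: "dotp (\<lambda>j. m j + w j) v = dotp m v + dotp w v" for m
    unfolding dotp_def by (simp add: distrib_right sum.distrib)
  let ?S = "(\<Sum>m\<in>UNIV. \<psi> (dotp m v))"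
  have "?S = (\<Sum>m\<in>UNIV. \<psi> (dotp (\<lambda>j. m j + w j) v))"
    by (rule sum.reindex_bij_witness[of _ "\<lambda>m j. m j + w j" "\<lambda>m j. m j - w j"]) auto
  also have "\<dots> = \<psi> a * ?S"
    by (simp add: dadd dw char_add[OF ac] sum_distrib_left mult.commute)
  finally have "(1 - \<psi> a) * ?S = 0" by (simp add: algebra_simps)
  then show ?thesis using a False by simp
qed


lemma key_id:
  fixes m d z z' :: "'n::finite \<Rightarrow> 'a::field"
  shows "t * (normsq (\<lambda>i. m i + d i) - normsq m) + dotp (\<lambda>i. m i + d i) z - dotp m z'
    = dotp m (\<lambda>i. 2 * t * d i + z i - z' i) + (t * normsq d + dotp d z)"
proof -
  have a: "normsq (\<lambda>i. m i + d i) - normsq m = (\<Sum>i\<in>UNIV. (m i + d i)^2 - (m i)^2)"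
    unfolding normsq_def by (rule sum_subtractf[symmetric])
  have a': "t * (normsq (\<lambda>i. m i + d i) - normsq m) = (\<Sum>i\<in>UNIV. t * ((m i + d i)^2 - (m i)^2))"
    unfolding a by (rule sum_distrib_left)
  have L: "t * (normsq (\<lambda>i. m i + d i) - normsq m) + dotp (\<lambda>i. m i + d i) z - dotp m z'
     = (\<Sum>i\<in>UNIV. t * ((m i + d i)^2 - (m i)^2) + (m i + d i) * z i - m i * z' i)"
    by (simp only: a' dotp_def sum.distrib sum_subtractf)
  have R: "dotp m (\<lambda>i. 2 * t * d i + z i - z' i) + (t * normsq d + dotp d z)
     = (\<Sum>i\<in>UNIV. m i * (2 * t * d i + z i - z' i) + (t * (d i)^2 + d i * z i))"
    by (simp only: normsq_def dotp_def sum_distrib_left sum.distrib)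
  show ?thesis unfolding L R
    by (rule sum.cong) (simp_all add: power2_eq_square algebra_simps)
qed

lemma sc:
  fixes a b t :: "'a::field"
  assumes "(2::'a) \<noteq> 0" "t \<noteq> 0"
  shows "t * ((b - a) / (2 * t))^2 + (b - a) / (2 * t) * a = (b^2 - a^2) / (4 * t)"
proof -
  define w where "w = (b - a) / (2 * t)"
  have nz: "2 * t \<noteq> 0" using assms by simp
  have w: "2 * t * w = b - a" unfolding w_def using nz by simp
  have nz4: "4 * t \<noteq> 0" using nz by (metis mult.assoc mult_2 mult_eq_0_iff numeral_Bit0)
  have "(4 * t) * (t * w^2 + w * a) = (2 * t * w)^2 + 2 * (2 * t * w) * a"
    by (simp add: power2_eq_square algebra_simps)
  also have "\<dots> = b^2 - a^2" unfolding w by (simp add: power2_eq_square algebra_simps)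
  finally have "(4 * t) * (t * w^2 + w * a) = b^2 - a^2" .
  then show ?thesis unfolding w_def[symmetric] using nz4 by (simp add: eq_divide_eq mult.commute)
qed

lemma key_id2:
  fixes z z' :: "'n::finite \<Rightarrow> 'a::field"
  assumes "(2::'a) \<noteq> 0" "t \<noteq> 0"
  shows "t * normsq (\<lambda>i. (z' i - z i) / (2 * t)) + dotp (\<lambda>i. (z' i - z i) / (2 * t)) z
     = (normsq z' - normsq z) / (4 * t)"
proof -
  have L: "t * normsq (\<lambda>i. (z' i - z i) / (2 * t)) + dotp (\<lambda>i. (z' i - z i) / (2 * t)) z
     = (\<Sum>i\<in>UNIV. t * ((z' i - z i) / (2 * t))^2 + (z' i - z i) / (2 * t) * z i)"
    by (simp only: normsq_def dotp_def sum_distrib_left sum.distrib)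
  have R: "(normsq z' - normsq z) / (4 * t) = (\<Sum>i\<in>UNIV. ((z' i)^2 - (z i)^2) / (4 * t))"
    by (simp only: normsq_def sum_divide_distrib[symmetric] sum_subtractf)
  show ?thesis unfolding L R
    by (rule sum.cong) (use assms sc in auto)
qed


lemma Jt:
  fixes \<psi> :: "'a::{finite,field} \<Rightarrow> complex" and z z' :: "'n::finite \<Rightarrow> 'a"
  assumes nt: "nontrivial_add_char \<psi>" and two: "(2::'a) \<noteq> 0" and t: "t \<noteq> 0"
  shows "(\<Sum>m'\<in>UNIV. \<Sum>m\<in>UNIV. \<psi> (t * (normsq m - normsq m') + dotp m z - dotp m' z'))
    = of_nat CARD('a) ^ CARD('n) * \<psi> ((normsq z' - normsq z) / (4 * t))"
proof -
  have ac: "add_char \<psi>" using nt unfolding nontrivial_add_char_def by blast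
  define w where "w d = (\<lambda>i. 2 * t * d i + z i - z' i)" for d :: "'n \<Rightarrow> 'a"
  define c where "c d = t * normsq d + dotp d z" for d :: "'n \<Rightarrow> 'a"
  define d0 where "d0 = (\<lambda>i. (z' i - z i) / (2 * t))"
  have wd: "(w d = (\<lambda>_. 0)) = (d = d0)" for d
  proof -
    have "2 * t \<noteq> 0" using two t by simp
    hence "(2 * t * d i + z i - z' i = 0) = (d i = (z' i - z i) / (2 * t))" for i
      by (auto simp: field_simps)
    thus ?thesis unfolding w_def d0_def fun_eq_iff by auto
  qed
  have "(\<Sum>m'\<in>UNIV. \<Sum>m\<in>UNIV. \<psi> (t * (normsq m - normsq m') + dotp m z - dotp m' z'))
     = (\<Sum>m'\<in>UNIV. \<Sum>d\<in>UNIV. \<psi> (t * (normsq (\<lambda>i. m' i + d i) - normsq m') + dotp (\<lambda>i. m' i + d i) z - dotp m' z'))"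
  proof (rule sum.cong[OF refl])
    fix m' :: "'n \<Rightarrow> 'a"
    show "(\<Sum>m\<in>UNIV. \<psi> (t * (normsq m - normsq m') + dotp m z - dotp m' z'))
      = (\<Sum>d\<in>UNIV. \<psi> (t * (normsq (\<lambda>i. m' i + d i) - normsq m') + dotp (\<lambda>i. m' i + d i) z - dotp m' z'))"
      by (rule sum.reindex_bij_witness[of _ "\<lambda>d i. m' i + d i" "\<lambda>m i. m i - m' i"]) auto
  qed
  also have "\<dots> = (\<Sum>m'\<in>UNIV. \<Sum>d\<in>UNIV. \<psi> (dotp m' (w d)) * \<psi> (c d))"
    unfolding key_id w_def c_def char_add[OF ac] ..
  also have "\<dots> = (\<Sum>d\<in>UNIV. \<psi> (c d) * (\<Sum>m'\<in>UNIV. \<psi> (dotp m' (w d))))"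
    by (subst sum.swap) (simp add: sum_distrib_left mult.commute)
  also have "\<dots> = (\<Sum>d\<in>UNIV. if d = d0 then \<psi> (c d0) * of_nat CARD('a) ^ CARD('n) else 0)"
    by (rule sum.cong[OF refl]) (simp add: orthn[OF nt] wd)
  also have "\<dots> = \<psi> (c d0) * of_nat CARD('a) ^ CARD('n)" by simp
  also have "c d0 = (normsq z' - normsq z) / (4 * t)"
    unfolding c_def d0_def by (rule key_id2[OF two t])
  finally show ?thesis by (simp add: mult.commute)
qed


lemma inv_sum:
  fixes \<psi> :: "'a::{finite,field} \<Rightarrow> complex"
  assumes nt: "nontrivial_add_char \<psi>" and two: "(2::'a) \<noteq> 0"
  shows "(\<Sum>t\<in>UNIV-{0}. \<psi> (D / (4 * t))) = (if D = 0 then of_nat CARD('a) else 0) - 1"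
proof -
  have ac: "add_char \<psi>" using nt unfolding nontrivial_add_char_def by blast
  have four: "(4::'a) \<noteq> 0" using two by (metis mult_2 mult_eq_0_iff numeral_Bit0)
  have "(\<Sum>t\<in>UNIV-{0}. \<psi> (D / (4 * t))) = (\<Sum>u\<in>UNIV-{0}. \<psi> (D * u))"
  proof (rule sum.reindex_bij_witness[of _ "\<lambda>t. 1 / (4 * t)" "\<lambda>t. 1 / (4 * t)"])
    fix a :: 'a assume "a \<in> UNIV - {0}"
    hence a: "a \<noteq> 0" by simp
    have "4 * a \<noteq> 0" using a four by simp
    thus "1 / (4 * (1 / (4 * a))) = a" using four by (simp add: field_simps)
    show "1 / (4 * a) \<in> UNIV - {0}" using a four by simp
    show "\<psi> (D * (1 / (4 * a))) = \<psi> (D / (4 * a))" by simp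
  next
    fix a :: 'a assume "a \<in> UNIV - {0}"
    hence a: "a \<noteq> 0" by simp
    have "4 * a \<noteq> 0" using a four by simp
    thus "1 / (4 * (1 / (4 * a))) = a" using four by (simp add: field_simps)
    show "1 / (4 * a) \<in> UNIV - {0}" using a four by simp
  qed
  also have "\<dots> = (\<Sum>u\<in>UNIV. \<psi> (D * u)) - \<psi> (D * 0)"
    by (simp add: sum_diff1)
  also have "\<dots> = (if D = 0 then of_nat CARD('a) else 0) - 1"
    using orth1[OF nt, of D] char0[OF ac] by simp
  finally show ?thesis .
qed

lemma Kform:
  fixes \<psi> :: "'a::{finite,field} \<Rightarrow> complex" and z z' :: "'n::finite \<Rightarrow> 'a"
  assumes nt: "nontrivial_add_char \<psi>" and two: "(2::'a) \<noteq> 0"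
  shows "(\<Sum>m\<in>UNIV. \<Sum>m'\<in>UNIV. if normsq m = normsq m' then \<psi> (dotp m z - dotp m' z') else 0)
    = (1 / of_nat CARD('a)) * (of_nat CARD('a) ^ (2 * CARD('n)) * (if z = (\<lambda>_. 0) \<and> z' = (\<lambda>_. 0) then 1 else 0)
       + of_nat CARD('a) ^ CARD('n) * ((if normsq z = normsq z' then of_nat CARD('a) else 0) - 1))"
proof -
  have ac: "add_char \<psi>" using nt unfolding nontrivial_add_char_def by blast
  let ?Q = "of_nat CARD('a) :: complex"
  define F where "F t m m' = \<psi> (t * (normsq m - normsq m') + dotp m z - dotp m' z')" for t m m'
  define G where "G t = (\<Sum>m\<in>UNIV. \<Sum>m'\<in>UNIV. F t m m')" for t
  have ind: "(if normsq m = normsq m' then \<psi> (dotp m z - dotp m' z') else 0)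
      = (1 / ?Q) * (\<Sum>t\<in>UNIV. F t m m')" for m m'
  proof -
    have "(\<Sum>t\<in>UNIV. F t m m') = (\<Sum>t\<in>UNIV. \<psi> ((normsq m - normsq m') * t)) * \<psi> (dotp m z - dotp m' z')"
      unfolding F_def sum_distrib_right
      by (rule sum.cong[OF refl]) (simp add: add_diff_eq[symmetric] char_add[OF ac] mult.commute)
    thus ?thesis unfolding orth1[OF nt] by simp
  qed
  have "(\<Sum>m\<in>UNIV. \<Sum>m'\<in>UNIV. if normsq m = normsq m' then \<psi> (dotp m z - dotp m' z') else 0)
      = (1 / ?Q) * (\<Sum>m\<in>UNIV. \<Sum>m'\<in>UNIV. \<Sum>t\<in>UNIV. F t m m')"
    unfolding ind by (simp add: sum_distrib_left)
  also have "(\<Sum>m\<in>UNIV. \<Sum>m'\<in>UNIV. \<Sum>t\<in>UNIV. F t m m') = (\<Sum>m\<in>UNIV. \<Sum>t\<in>UNIV. \<Sum>m'\<in>UNIV. F t m m')"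
    by (rule sum.cong[OF refl]) (rule sum.swap)
  also have "\<dots> = (\<Sum>t\<in>UNIV. G t)" unfolding G_def by (rule sum.swap)
  also have "\<dots> = G 0 + (\<Sum>t\<in>UNIV-{0}. G t)" by (simp add: sum.remove)
  also have "G 0 = ?Q ^ (2 * CARD('n)) * (if z = (\<lambda>_. 0) \<and> z' = (\<lambda>_. 0) then 1 else 0)"
  proof -
    have "G 0 = (\<Sum>m\<in>UNIV. \<psi> (dotp m z)) * cnj (\<Sum>m'\<in>UNIV. \<psi> (dotp m' z'))"
      unfolding G_def F_def sum_product cnj_sum by (simp add: char_diff[OF ac])
    also have "\<dots> = ?Q ^ (2 * CARD('n)) * (if z = (\<lambda>_. 0) \<and> z' = (\<lambda>_. 0) then 1 else 0)"
      unfolding orthn[OF nt] by (simp add: power_mult_distrib mult_2 power_add)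
    finally show ?thesis .
  qed
  also have "(\<Sum>t\<in>UNIV-{0}. G t) = (\<Sum>t\<in>UNIV-{0}. ?Q ^ CARD('n) * \<psi> ((normsq z' - normsq z) / (4 * t)))"
  proof (rule sum.cong[OF refl])
    fix t assume "t \<in> (UNIV :: 'a set) - {0}"
    hence t: "t \<noteq> 0" by simp
    show "G t = ?Q ^ CARD('n) * \<psi> ((normsq z' - normsq z) / (4 * t))"
      unfolding G_def F_def using Jt[OF nt two t, of z z'] by (subst sum.swap) simp
  qed
  also have "\<dots> = ?Q ^ CARD('n) * ((if normsq z = normsq z' then ?Q else 0) - 1)"
    unfolding sum_distrib_left[symmetric] inv_sum[OF nt two] by simp
  finally show ?thesis .
qed


lemma swap22:
  "(\<Sum>a\<in>A. \<Sum>b\<in>B. \<Sum>c\<in>C. \<Sum>d\<in>D. g a b c d) = (\<Sum>c\<in>C. \<Sum>d\<in>D. \<Sum>a\<in>A. \<Sum>b\<in>B. g a b c d)"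
proof -
  have "(\<Sum>a\<in>A. \<Sum>b\<in>B. \<Sum>c\<in>C. \<Sum>d\<in>D. g a b c d) = (\<Sum>a\<in>A. \<Sum>c\<in>C. \<Sum>b\<in>B. \<Sum>d\<in>D. g a b c d)"
    by (rule sum.cong[OF refl], rule sum.swap)
  also have "\<dots> = (\<Sum>a\<in>A. \<Sum>c\<in>C. \<Sum>d\<in>D. \<Sum>b\<in>B. g a b c d)"
    by (rule sum.cong[OF refl], rule sum.cong[OF refl], rule sum.swap)
  also have "\<dots> = (\<Sum>c\<in>C. \<Sum>a\<in>A. \<Sum>d\<in>D. \<Sum>b\<in>B. g a b c d)"
    by (rule sum.swap)
  also have "\<dots> = (\<Sum>c\<in>C. \<Sum>d\<in>D. \<Sum>a\<in>A. \<Sum>b\<in>B. g a b c d)"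
    by (rule sum.cong[OF refl], rule sum.swap)
  finally show ?thesis .
qed

lemma swap14:
  "(\<Sum>j\<in>J. \<Sum>a\<in>A. \<Sum>b\<in>B. \<Sum>c\<in>C. \<Sum>d\<in>D. g j a b c d) = (\<Sum>a\<in>A. \<Sum>b\<in>B. \<Sum>c\<in>C. \<Sum>d\<in>D. \<Sum>j\<in>J. g j a b c d)"
proof -
  have "(\<Sum>j\<in>J. \<Sum>a\<in>A. \<Sum>b\<in>B. \<Sum>c\<in>C. \<Sum>d\<in>D. g j a b c d) = (\<Sum>a\<in>A. \<Sum>j\<in>J. \<Sum>b\<in>B. \<Sum>c\<in>C. \<Sum>d\<in>D. g j a b c d)"
    by (rule sum.swap)
  also have "\<dots> = (\<Sum>a\<in>A. \<Sum>b\<in>B. \<Sum>j\<in>J. \<Sum>c\<in>C. \<Sum>d\<in>D. g j a b c d)"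
    by (rule sum.cong[OF refl], rule sum.swap)
  also have "\<dots> = (\<Sum>a\<in>A. \<Sum>b\<in>B. \<Sum>c\<in>C. \<Sum>j\<in>J. \<Sum>d\<in>D. g j a b c d)"
    by (rule sum.cong[OF refl], rule sum.cong[OF refl], rule sum.swap)
  also have "\<dots> = (\<Sum>a\<in>A. \<Sum>b\<in>B. \<Sum>c\<in>C. \<Sum>d\<in>D. \<Sum>j\<in>J. g j a b c d)"
    by (rule sum.cong[OF refl], rule sum.cong[OF refl], rule sum.cong[OF refl], rule sum.swap)
  finally show ?thesis .
qed

lemma sum_level: "sum f {m. h m = r} = (\<Sum>m\<in>UNIV. if h m = r then f m else 0)"
  for f :: "'b::finite \<Rightarrow> 'c::comm_monoid_add"
  by (simp add: sum.If_cases)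

lemma group_prod:
  fixes h :: "'b::finite \<Rightarrow> 'c::finite" and a b :: "'b \<Rightarrow> 'd::comm_semiring_1"
  shows "(\<Sum>r\<in>UNIV. (\<Sum>m\<in>{m. h m = r}. a m) * (\<Sum>m'\<in>{m'. h m' = r}. b m'))
    = (\<Sum>m\<in>UNIV. \<Sum>m'\<in>UNIV. if h m = h m' then a m * b m' else 0)"
proof -
  have "(\<Sum>r\<in>UNIV. (\<Sum>m\<in>{m. h m = r}. a m) * (\<Sum>m'\<in>{m'. h m' = r}. b m'))
     = (\<Sum>r\<in>UNIV. \<Sum>m\<in>UNIV. \<Sum>m'\<in>UNIV. (if h m = r then a m else 0) * (if h m' = r then b m' else 0))"
    unfolding sum_level sum_product ..
  also have "\<dots> = (\<Sum>m\<in>UNIV. \<Sum>m'\<in>UNIV. \<Sum>r\<in>UNIV. (if h m = r then a m else 0) * (if h m' = r then b m' else 0))"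
    by (subst sum.swap, rule sum.cong[OF refl], rule sum.swap)
  also have "\<dots> = (\<Sum>m\<in>UNIV. \<Sum>m'\<in>UNIV. if h m = h m' then a m * b m' else 0)"
  proof (intro sum.cong[OF refl])
    fix m m'
    have "(\<Sum>r\<in>UNIV. (if h m = r then a m else 0) * (if h m' = r then b m' else 0))
       = (\<Sum>r\<in>UNIV. if h m = r then (if h m' = h m then a m * b m' else 0) else 0)"
      by (rule sum.cong) auto
    also have "\<dots> = (if h m = h m' then a m * b m' else 0)" by (simp add: eq_commute)
    finally show "(\<Sum>r\<in>UNIV. (if h m = r then a m else 0) * (if h m' = r then b m' else 0))
       = (if h m = h m' then a m * b m' else 0)" .
  qed
  finally show ?thesis .
qed

lemma nu_sum:
  fixes E F :: "('n::finite \<Rightarrow> 'a::{finite,field}) set"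
  shows "real (nu E F j) = (\<Sum>x\<in>E. \<Sum>y\<in>F. if normsq (x - y) = j then 1 else 0)"
proof -
  have "{(x, y). x \<in> E \<and> y \<in> F \<and> normsq (x - y) = j} = Sigma E (\<lambda>x. {y\<in>F. normsq (x - y) = j})"
    by auto
  hence "nu E F j = (\<Sum>x\<in>E. card {y\<in>F. normsq (x - y) = j})"
    unfolding nu_def by (simp add: card_SigmaI)
  moreover have "real (card {y\<in>F. normsq (x - y) = j}) = (\<Sum>y\<in>F. if normsq (x - y) = j then 1 else 0)" for x
    by (simp add: sum.inter_filter[symmetric])
  ultimately show ?thesis by simp
qed

lemma delta2:
  fixes u v :: "'c::finite"
  shows "(\<Sum>j\<in>UNIV. (if u = j then 1 else 0) * (if v = j then 1 else 0)) = (if u = v then 1 else (0::real))"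
proof -
  have "(\<Sum>j\<in>UNIV. (if u = j then 1 else 0) * (if v = j then 1 else 0))
      = (\<Sum>j\<in>UNIV. if u = j then (if v = u then 1 else 0) else (0::real))"
    by (rule sum.cong) auto
  thus ?thesis by (simp add: eq_commute)
qed

lemma M_sum:
  fixes E F :: "('n::finite \<Rightarrow> 'a::{finite,field}) set"
  shows "(\<Sum>j\<in>UNIV. real (nu E F j)^2)
    = (\<Sum>x\<in>E. \<Sum>x'\<in>E. \<Sum>y\<in>F. \<Sum>y'\<in>F. if normsq (x - y) = normsq (x' - y') then 1 else 0)"
proof -
  have "(\<Sum>j\<in>UNIV. real (nu E F j)^2) = (\<Sum>j\<in>UNIV. \<Sum>x\<in>E. \<Sum>x'\<in>E. \<Sum>y\<in>F. \<Sum>y'\<in>F.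
     (if normsq (x - y) = j then 1 else 0) * (if normsq (x' - y') = j then 1 else 0))"
    unfolding nu_sum power2_eq_square sum_product ..
  also have "\<dots> = (\<Sum>x\<in>E. \<Sum>x'\<in>E. \<Sum>y\<in>F. \<Sum>y'\<in>F. \<Sum>j\<in>UNIV.
     (if normsq (x - y) = j then 1 else 0) * (if normsq (x' - y') = j then 1 else 0))"
    by (rule swap14)
  also have "\<dots> = (\<Sum>x\<in>E. \<Sum>x'\<in>E. \<Sum>y\<in>F. \<Sum>y'\<in>F. if normsq (x - y) = normsq (x' - y') then 1 else 0)"
  proof (intro sum.cong[OF refl])
    fix x x' y y' :: "'n \<Rightarrow> 'a"
    show "(\<Sum>j\<in>UNIV. (if normsq (x - y) = j then 1 else 0) * (if normsq (x' - y') = j then 1 else 0))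
       = (if normsq (x - y) = normsq (x' - y') then 1 else (0::real))"
      by (rule delta2)
  qed
  finally show ?thesis .
qed


lemma dotp_diff: "dotp m (x - y) = dotp x m - dotp y m"
  unfolding dotp_def fun_diff_def by (simp add: sum_subtractf[symmetric] algebra_simps)

lemma four_E:
  "fourier \<psi> (ind E) m = (1 / (of_nat CARD('a)) ^ CARD('n)) * (\<Sum>x\<in>E. \<psi> (- dotp x m))"
  for \<psi> :: "'a::{finite,field} \<Rightarrow> complex" and E :: "('n::finite \<Rightarrow> 'a) set"
proof -
  have "(\<Sum>x\<in>UNIV. \<psi> (- dotp x m) * ind E x) = (\<Sum>x\<in>UNIV. if x \<in> E then \<psi> (- dotp x m) else 0)"
    unfolding ind_def by (rule sum.cong) auto
  also have "\<dots> = (\<Sum>x\<in>E. \<psi> (- dotp x m))" by (simp add: sum.If_cases)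
  finally show ?thesis unfolding fourier_def by simp
qed

lemma prodFT:
  fixes \<psi> :: "'a::{finite,field} \<Rightarrow> complex" and E F :: "('n::finite \<Rightarrow> 'a) set"
  assumes ac: "add_char \<psi>"
  shows "cnj (fourier \<psi> (ind E) m) * fourier \<psi> (ind F) m
    = ((1 / (of_nat CARD('a)) ^ CARD('n))^2) * (\<Sum>x\<in>E. \<Sum>y\<in>F. \<psi> (dotp m (x - y)))"
proof -
  have c: "cnj (\<psi> (- a)) = \<psi> a" for a using char_neg[OF ac, of a] by simp
  have p: "\<psi> a * \<psi> (- b) = \<psi> (a - b)" for a b
    using char_add[OF ac, of a "-b"] by simp
  show ?thesis unfolding four_E dotp_diff
    by (simp add: c p sum_product power2_eq_square algebra_simps)
qed

lemma sigma_main: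
  fixes \<psi> :: "'a::{finite,field} \<Rightarrow> complex" and E F :: "('n::finite \<Rightarrow> 'a) set"
  assumes ac: "add_char \<psi>"
  shows "(\<Sum>r\<in>UNIV. sigma2 \<psi> E F r * cnj (sigma2 \<psi> E F r))
    = ((1 / (of_nat CARD('a)) ^ CARD('n))^2)^2 * (\<Sum>x\<in>E. \<Sum>x'\<in>E. \<Sum>y\<in>F. \<Sum>y'\<in>F.
        \<Sum>m\<in>UNIV. \<Sum>m'\<in>UNIV. if normsq m = normsq m' then \<psi> (dotp m (x - y) - dotp m' (x' - y')) else 0)"
proof -
  let ?c = "(1 / (of_nat CARD('a) :: complex) ^ CARD('n))^2"
  define T where "T m = (\<Sum>x\<in>E. \<Sum>y\<in>F. \<psi> (dotp m (x - y)))" for m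
  have s2: "sigma2 \<psi> E F r = ?c * (\<Sum>m\<in>{m. normsq m = r}. T m)" for r
    unfolding sigma2_def prodFT[OF ac] T_def sum_distrib_left ..
  have cc: "cnj ?c = ?c" by simp
  have "(\<Sum>r\<in>UNIV. sigma2 \<psi> E F r * cnj (sigma2 \<psi> E F r))
     = ?c^2 * (\<Sum>r\<in>UNIV. (\<Sum>m\<in>{m. normsq m = r}. T m) * (\<Sum>m'\<in>{m'. normsq m' = r}. cnj (T m')))"
  proof -
    have gen: "\<And>a x y::complex. a * x * (a * y) = a^2 * (x * y)" by (simp add: power2_eq_square)
    show ?thesis unfolding s2 complex_cnj_mult cc cnj_sum gen by (rule sum_distrib_left[symmetric])
  qed
  also have "(\<Sum>r\<in>UNIV. (\<Sum>m\<in>{m. normsq m = r}. T m) * (\<Sum>m'\<in>{m'. normsq m' = r}. cnj (T m')))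
     = (\<Sum>m\<in>UNIV. \<Sum>m'\<in>UNIV. if normsq m = normsq m' then T m * cnj (T m') else 0)"
    by (rule group_prod)
  also have "\<dots> = (\<Sum>m\<in>UNIV. \<Sum>m'\<in>UNIV. \<Sum>x\<in>E. \<Sum>x'\<in>E. \<Sum>y\<in>F. \<Sum>y'\<in>F.
       if normsq m = normsq m' then \<psi> (dotp m (x - y) - dotp m' (x' - y')) else 0)"
  proof (intro sum.cong[OF refl])
    fix m m' :: "'n \<Rightarrow> 'a"
    have "T m * cnj (T m') = (\<Sum>x\<in>E. \<Sum>x'\<in>E. \<Sum>y\<in>F. \<Sum>y'\<in>F. \<psi> (dotp m (x - y) - dotp m' (x' - y')))"
      unfolding T_def cnj_sum sum_product char_diff[OF ac] ..
    thus "(if normsq m = normsq m' then T m * cnj (T m') else 0) = (\<Sum>x\<in>E. \<Sum>x'\<in>E. \<Sum>y\<in>F. \<Sum>y'\<in>F.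
       if normsq m = normsq m' then \<psi> (dotp m (x - y) - dotp m' (x' - y')) else 0)"
      by simp
  qed
  also have "\<dots> = (\<Sum>x\<in>E. \<Sum>x'\<in>E. \<Sum>m\<in>UNIV. \<Sum>m'\<in>UNIV. \<Sum>y\<in>F. \<Sum>y'\<in>F.
       if normsq m = normsq m' then \<psi> (dotp m (x - y) - dotp m' (x' - y')) else 0)"
    by (rule swap22)
  also have "\<dots> = (\<Sum>x\<in>E. \<Sum>x'\<in>E. \<Sum>y\<in>F. \<Sum>y'\<in>F. \<Sum>m\<in>UNIV. \<Sum>m'\<in>UNIV.
       if normsq m = normsq m' then \<psi> (dotp m (x - y) - dotp m' (x' - y')) else 0)"
    by (intro sum.cong[OF refl], rule swap22)
  finally show ?thesis by (simp add: power2_eq_square)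
qed


lemma cs_real:
  fixes a :: "'b \<Rightarrow> real"
  shows "(\<Sum>i\<in>I. a i * b i)\<^sup>2 \<le> (\<Sum>i\<in>I. (a i)\<^sup>2) * (\<Sum>i\<in>I. (b i)\<^sup>2)"
proof (cases "(\<Sum>i\<in>I. (b i)\<^sup>2) > 0")
  case False
  then consider "\<And>i. i\<in>I \<Longrightarrow> b i = 0" | "infinite I"
    by (metis (mono_tags, lifting) sum_pos2 zero_le_power2 zero_less_power2)
  thus ?thesis
    by fastforce
next
  case True
  define r where "r \<equiv> (\<Sum>i\<in>I. a i * b i) / (\<Sum>i\<in>I. (b i)\<^sup>2)"
  have "0 \<le> (\<Sum>i\<in>I. (a i - r * b i)\<^sup>2)"
    by (simp add: sum_nonneg)
  also have "... = (\<Sum>i\<in>I. (a i)\<^sup>2) - 2 * r * (\<Sum>i\<in>I. a i * b i) + r\<^sup>2 * (\<Sum>i\<in>I. (b i)\<^sup>2)"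
    by (simp add: algebra_simps power2_eq_square sum_distrib_left flip: sum.distrib)
  also have "\<dots> = (\<Sum>i\<in>I. (a i)\<^sup>2) - ((\<Sum>i\<in>I. a i * b i))\<^sup>2 / (\<Sum>i\<in>I. (b i)\<^sup>2)"
    by (simp add: r_def power2_eq_square)
  finally have "0 \<le> (\<Sum>i\<in>I. (a i)\<^sup>2) - ((\<Sum>i\<in>I. a i * b i))\<^sup>2 / (\<Sum>i\<in>I. (b i)\<^sup>2)" .
  hence "((\<Sum>i\<in>I. a i * b i))\<^sup>2 / (\<Sum>i\<in>I. (b i)\<^sup>2) \<le> (\<Sum>i\<in>I. (a i)\<^sup>2)"
    by (simp add: le_diff_eq)
  thus "((\<Sum>i\<in>I. a i * b i))\<^sup>2 \<le> (\<Sum>i\<in>I. (a i)\<^sup>2) * (\<Sum>i\<in>I. (b i)\<^sup>2)"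
    by (simp add: pos_divide_le_eq True)
qed

lemma cs_sigma:
  fixes \<psi> :: "'a::{finite,field} \<Rightarrow> complex" and E F :: "('n::finite \<Rightarrow> 'a) set"
  shows "(cmod (sigma2 \<psi> E F r))^2 \<le> sigma \<psi> E r * sigma \<psi> F r"
proof -
  let ?S = "{m :: 'n \<Rightarrow> 'a. normsq m = r}"
  let ?a = "\<lambda>m. cmod (fourier \<psi> (ind E) m)" and ?b = "\<lambda>m. cmod (fourier \<psi> (ind F) m)"
  have "cmod (sigma2 \<psi> E F r) \<le> (\<Sum>m\<in>?S. ?a m * ?b m)"
    unfolding sigma2_def
    by (rule order_trans[OF norm_sum]) (simp add: norm_mult)
  hence "(cmod (sigma2 \<psi> E F r))^2 \<le> (\<Sum>m\<in>?S. ?a m * ?b m)^2"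
    by (rule power_mono) simp
  also have "\<dots> \<le> (\<Sum>m\<in>?S. (?a m)^2) * (\<Sum>m\<in>?S. (?b m)^2)"
    by (rule cs_real)
  finally show ?thesis unfolding sigma_def .
qed

lemma quad_lin:
  fixes f g :: "'b \<Rightarrow> 'b \<Rightarrow> 'c \<Rightarrow> 'c \<Rightarrow> real"
  shows "(\<Sum>x\<in>A. \<Sum>x'\<in>A. \<Sum>y\<in>B. \<Sum>y'\<in>B. \<alpha> * f x x' y y' + \<beta> * g x x' y y' - \<gamma>)
    = \<alpha> * (\<Sum>x\<in>A. \<Sum>x'\<in>A. \<Sum>y\<in>B. \<Sum>y'\<in>B. f x x' y y') + \<beta> * (\<Sum>x\<in>A. \<Sum>x'\<in>A. \<Sum>y\<in>B. \<Sum>y'\<in>B. g x x' y y')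
      - \<gamma> * (real (card A) * real (card A) * real (card B) * real (card B))"
  by (simp add: sum.distrib sum_subtractf sum_distrib_left algebra_simps)

lemma I2_sum:
  fixes E F :: "('n::finite \<Rightarrow> 'a::{finite,field}) set"
  shows "(\<Sum>x\<in>E. \<Sum>x'\<in>E. \<Sum>y\<in>F. \<Sum>y'\<in>F. if x = y \<and> x' = y' then 1 else 0) = (real (card (E \<inter> F)))^2"
proof -
  have a: "(\<Sum>x\<in>E. \<Sum>y\<in>F. if x = y then 1 else 0) = real (card (E \<inter> F))"
  proof -
    have "(\<Sum>x\<in>E. \<Sum>y\<in>F. if x = y then 1 else 0) = (\<Sum>x\<in>E. if x \<in> F then 1 else (0::real))"
      by (rule sum.cong[OF refl]) simp
    also have "\<dots> = real (card (E \<inter> F))" by (simp add: sum.If_cases)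
    finally show ?thesis .
  qed
  have "(\<Sum>x\<in>E. \<Sum>x'\<in>E. \<Sum>y\<in>F. \<Sum>y'\<in>F. if x = y \<and> x' = y' then 1 else 0)
      = (\<Sum>x\<in>E. \<Sum>y\<in>F. if x = y then 1 else (0::real)) * (\<Sum>x'\<in>E. \<Sum>y'\<in>F. if x' = y' then 1 else 0)"
    unfolding sum_product by (intro sum.cong[OF refl]) simp
  thus ?thesis unfolding a by (simp add: power2_eq_square)
qed

theorem lemma7:
  fixes \<psi> :: "'a::{finite,field} \<Rightarrow> complex"
    and E F :: "('n::finite \<Rightarrow> 'a) set"
  assumes "odd CARD('a)"
    and "nontrivial_add_char \<psi>"
  defines "q \<equiv> real CARD('a)" and "s \<equiv> CARD('n)"
  shows "((\<Sum>j\<in>UNIV. real (nu E F j)^2)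
      \<le> real (card E)^2 * real (card F)^2 / q + q^(s-1) * real (card E) * real (card F)
        + q^(3*s) * (cmod (sigma2 \<psi> E F 0))^2
        + q^(3*s) * (\<Sum>r\<in>UNIV-{0}. sigma \<psi> E r * sigma \<psi> F r))
    \<and> (real (card E)^2 * real (card F)^2 / q + q^(s-1) * real (card E) * real (card F)
        + q^(3*s) * (cmod (sigma2 \<psi> E F 0))^2
        + q^(3*s) * (\<Sum>r\<in>UNIV-{0}. sigma \<psi> E r * sigma \<psi> F r)
      \<le> real (card E)^2 * real (card F)^2 / q
        + q^(3*s) * (\<Sum>r\<in>UNIV. sigma \<psi> E r * sigma \<psi> F r)
        + q^(s-1) * real (card E) * real (card F))"
proof -
  have nt: "nontrivial_add_char \<psi>" by fact
  have ac: "add_char \<psi>" using nt unfolding nontrivial_add_char_def by blast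
  have two: "(2::'a) \<noteq> 0" by (rule two_nz) fact
  have qpos: "q > 0" unfolding q_def by simp
  have spos: "s \<ge> 1" unfolding s_def by (simp add: Suc_le_eq)
  define P where "P = q ^ s"
  have Ppos: "P > 0" unfolding P_def using qpos by simp
  have qs1: "q^(s-1) = P / q" unfolding P_def using spos qpos
    by (metis Suc_diff_1 less_le_trans nonzero_mult_div_cancel_left power_Suc qpos zero_less_one
        order.strict_iff_not Suc_le_eq less_numeral_extra(3))
  have q3: "q^(3*s) = P^3" unfolding P_def by (simp add: power_mult mult.commute)
  define M where "M = (\<Sum>x\<in>E. \<Sum>x'\<in>E. \<Sum>y\<in>F. \<Sum>y'\<in>F. if normsq (x - y) = normsq (x' - y') then 1 else (0::real))"
  define I2 where "I2 = (\<Sum>x\<in>E. \<Sum>x'\<in>E. \<Sum>y\<in>F. \<Sum>y'\<in>F. if x = y \<and> x' = y' then 1 else (0::real))"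
  define N where "N = real (card E) * real (card E) * real (card F) * real (card F)"
  define S where "S = (\<Sum>r\<in>UNIV. (cmod (sigma2 \<psi> E F r))^2)"
  have Kq: "(\<Sum>m\<in>UNIV. \<Sum>m'\<in>UNIV. if normsq m = normsq m' then \<psi> (dotp m (x - y) - dotp m' (x' - y')) else 0)
     = complex_of_real (P^2 / q * (if x = y \<and> x' = y' then 1 else 0)
         + P * (if normsq (x - y) = normsq (x' - y') then 1 else 0) - P / q)"
    for x x' y y' :: "'n \<Rightarrow> 'a"
  proof -
    have z: "(x - y = (\<lambda>_. 0)) = (x = y)" for x y :: "'n \<Rightarrow> 'a"
      by (simp add: fun_diff_def fun_eq_iff)
    show ?thesis unfolding Kform[OF nt two] z P_def q_def s_def
      using qpos unfolding q_def
      by (simp add: power_mult mult.commute[of 2] power2_eq_square field_simps)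
  qed
  have "complex_of_real S = (\<Sum>r\<in>UNIV. sigma2 \<psi> E F r * cnj (sigma2 \<psi> E F r))"
    unfolding S_def of_real_sum complex_norm_square ..
  also have "\<dots> = complex_of_real ((1 / P^2)^2 * (P^2 / q * I2 + P * M - P / q * N))"
  proof -
    have A: "(\<Sum>x\<in>E. \<Sum>x'\<in>E. \<Sum>y\<in>F. \<Sum>y'\<in>F. \<Sum>m\<in>UNIV. \<Sum>m'\<in>UNIV.
        if normsq m = normsq m' then \<psi> (dotp m (x - y) - dotp m' (x' - y')) else 0)
      = (\<Sum>x\<in>E. \<Sum>x'\<in>E. \<Sum>y\<in>F. \<Sum>y'\<in>F. complex_of_real (P^2 / q * (if x = y \<and> x' = y' then 1 else 0)
         + P * (if normsq (x - y) = normsq (x' - y') then 1 else 0) - P / q))"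
      by (intro sum.cong refl Kq)
    also have "\<dots> = complex_of_real (\<Sum>x\<in>E. \<Sum>x'\<in>E. \<Sum>y\<in>F. \<Sum>y'\<in>F. P^2 / q * (if x = y \<and> x' = y' then 1 else 0)
         + P * (if normsq (x - y) = normsq (x' - y') then 1 else 0) - P / q)"
      by (simp only: of_real_sum)
    also have "(\<Sum>x\<in>E. \<Sum>x'\<in>E. \<Sum>y\<in>F. \<Sum>y'\<in>F. P^2 / q * (if x = y \<and> x' = y' then 1 else 0)
         + P * (if normsq (x - y) = normsq (x' - y') then 1 else 0) - P / q)
       = P^2 / q * I2 + P * M - P / q * N"
      unfolding I2_def M_def N_def by (rule quad_lin)
    finally have A': "(\<Sum>x\<in>E. \<Sum>x'\<in>E. \<Sum>y\<in>F. \<Sum>y'\<in>F. \<Sum>m\<in>UNIV. \<Sum>m'\<in>UNIV.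
        if normsq m = normsq m' then \<psi> (dotp m (x - y) - dotp m' (x' - y')) else 0)
      = complex_of_real (P^2 / q * I2 + P * M - P / q * N)" .
    have c: "((1 / (of_nat CARD('a) :: complex) ^ CARD('n))^2)^2 = complex_of_real ((1 / P^2)^2)"
      unfolding P_def q_def s_def by (simp add: power_divide flip: power_mult)
    show ?thesis unfolding sigma_main[OF ac] A' c of_real_mult ..
  qed
  finally have Seq: "S = (1 / P^2)^2 * (P^2 / q * I2 + P * M - P / q * N)"
    by (rule of_real_eq_iff[THEN iffD1])
  have Meq: "M = P^3 * S - P / q * I2 + N / q"
    unfolding Seq using Ppos qpos by (simp add: field_simps power2_eq_square power3_eq_cube)
  have nuM: "(\<Sum>j\<in>UNIV. real (nu E F j)^2) = M" unfolding M_def by (rule M_sum)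
  have I2nn: "I2 \<ge> 0" unfolding I2_def I2_sum by simp
  have Ssplit: "S = (cmod (sigma2 \<psi> E F 0))^2 + (\<Sum>r\<in>UNIV-{0}. (cmod (sigma2 \<psi> E F r))^2)"
    unfolding S_def by (simp add: sum.remove)
  have Sle: "(\<Sum>r\<in>UNIV-{0}. (cmod (sigma2 \<psi> E F r))^2) \<le> (\<Sum>r\<in>UNIV-{0}. sigma \<psi> E r * sigma \<psi> F r)"
    by (rule sum_mono) (rule cs_sigma)
  have EF: "real (card E)^2 * real (card F)^2 = N" unfolding N_def by (simp add: power2_eq_square)
  have ef: "P / q * real (card E) * real (card F) \<ge> 0" using Ppos qpos by simp
  have P3: "P^3 > 0" using Ppos by simp
  have part1: "(\<Sum>j\<in>UNIV. real (nu E F j)^2)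
      \<le> real (card E)^2 * real (card F)^2 / q + q^(s-1) * real (card E) * real (card F)
        + q^(3*s) * (cmod (sigma2 \<psi> E F 0))^2
        + q^(3*s) * (\<Sum>r\<in>UNIV-{0}. sigma \<psi> E r * sigma \<psi> F r)"
  proof -
    have "P^3 * S \<le> P^3 * ((cmod (sigma2 \<psi> E F 0))^2 + (\<Sum>r\<in>UNIV-{0}. sigma \<psi> E r * sigma \<psi> F r))"
      unfolding Ssplit using Sle P3 by (intro mult_left_mono) auto
    moreover have "P / q * I2 \<ge> 0" using I2nn Ppos qpos by simp
    ultimately show ?thesis unfolding nuM Meq qs1 q3 EF using ef by (simp add: algebra_simps)
  qed
  have part2: "q^(3*s) * (cmod (sigma2 \<psi> E F 0))^2 + q^(3*s) * (\<Sum>r\<in>UNIV-{0}. sigma \<psi> E r * sigma \<psi> F r)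
      \<le> q^(3*s) * (\<Sum>r\<in>UNIV. sigma \<psi> E r * sigma \<psi> F r)"
  proof -
    have "(\<Sum>r\<in>UNIV. sigma \<psi> E r * sigma \<psi> F r) = sigma \<psi> E 0 * sigma \<psi> F 0 + (\<Sum>r\<in>UNIV-{0}. sigma \<psi> E r * sigma \<psi> F r)"
      by (simp add: sum.remove)
    moreover have "q^(3*s) * (cmod (sigma2 \<psi> E F 0))^2 \<le> q^(3*s) * (sigma \<psi> E 0 * sigma \<psi> F 0)"
      using cs_sigma qpos by (intro mult_left_mono) auto
    ultimately show ?thesis by (simp add: algebra_simps)
  qed
  show ?thesis using part1 part2 by linarith
qed

end
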